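(* Let $\mathbb{E}_{a,b,c}=\{(x,y,z): x^2/a^2+y^2/b^2+z^2/c^2=1\}$ be an ellipsoid with $a>b>c>0$. Then $\mathbb{E}_{a,b,c}$ has exactly four umbilic points, located in the plane $y=0$ (the plane of symmetry orthogonal to the middle axis), and each of them is of type $G_1$ for the geometric mean curvature lines and of type $D_1$ for the principal curvature lines.
   Context: An umbilic point is a point where the principal curvatures coincide. At an umbilic point choose a Monge chart $(x,y)\mapsto(x,y,h(x,y))$ centered at it with $h=\frac{k}{2}(x^2+y^2)+\frac{a}{6}x^3+\frac{b}{2}xy^2+\frac{c}{6}y^3+O(4)$ (here $a,b,c,k$ are the local coefficients, not the ellipsoid's axes). The point is of type $G_1$ if $kb(b-a)\neq0$ and $\Delta_G=4c^2(2a-b)^2-[3c^2+(a-5b)^2][3(a-5b)(a-b)+c^2]>0$. It is of type $D_1$ if $b(b-a)\neq0$ and $\Delta_P=4b(a-2b)^3-c^2(a-2b)^2>0$. Geometric mean curvature lines are curves with normal curvature equal to $\sqrt{\mathcal{K}}$, $\mathcal{K}$ the Gaussian curvature. *)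

theory Defs
  imports "HOL-Analysis.Analysis" "HOL-Library.Landau_Symbols"
begin

text \<open>Points of Euclidean 3-space are vectors of type real^3 with coordinates
  x = p$1, y = p$2, z = p$3.\<close>

definition ellipsoid :: "real \<Rightarrow> real \<Rightarrow> real \<Rightarrow> (real^3) set" where
  "ellipsoid a b c = {p. (p$1)^2/a^2 + (p$2)^2/b^2 + (p$3)^2/c^2 = 1}"

definition ell_grad :: "real \<Rightarrow> real \<Rightarrow> real \<Rightarrow> real^3 \<Rightarrow> real^3" where
  "ell_grad a b c p = (\<chi> i. if i = 1 then 2 * p$1 / a^2 else if i = 2 then 2 * p$2 / b^2
                               else 2 * p$3 / c^2)"

definition ell_normal :: "real \<Rightarrow> real \<Rightarrow> real \<Rightarrow> real^3 \<Rightarrow> real^3" where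
  "ell_normal a b c p = (1 / norm (ell_grad a b c p)) *\<^sub>R ell_grad a b c p"

text \<open>Umbilic point: the shape operator (minus the differential of the Gauss map,
  restricted to the tangent plane) has coinciding eigenvalues (principal curvatures),
  i.e. it is a scalar multiple of the identity on the tangent plane.\<close>

definition ell_umbilic :: "real \<Rightarrow> real \<Rightarrow> real \<Rightarrow> real^3 \<Rightarrow> bool" where
  "ell_umbilic a b c p \<longleftrightarrow> p \<in> ellipsoid a b c \<and>
     (\<exists>D l. (ell_normal a b c has_derivative D) (at p) \<and>
        (\<forall>v. v \<bullet> ell_normal a b c p = 0 \<longrightarrow> D v = l *\<^sub>R v))"

definition monge_chart ::
  "(real^3) set \<Rightarrow> real^3 \<Rightarrow> real^3 \<Rightarrow> real^3 \<Rightarrow> real^3 \<Rightarrow> real \<Rightarrow> real \<Rightarrow> real \<Rightarrow> real \<Rightarrow> bool"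
where
  "monge_chart S p e1 e2 N k ca cb cc \<longleftrightarrow>
     p \<in> S \<and>
     e1 \<bullet> e1 = 1 \<and> e2 \<bullet> e2 = 1 \<and> N \<bullet> N = 1 \<and>
     e1 \<bullet> e2 = 0 \<and> e1 \<bullet> N = 0 \<and> e2 \<bullet> N = 0 \<and>
     (\<exists>h :: real \<times> real \<Rightarrow> real.
        h (0, 0) = 0 \<and>
        (\<forall>\<^sub>F v in nhds (0, 0). p + fst v *\<^sub>R e1 + snd v *\<^sub>R e2 + h v *\<^sub>R N \<in> S) \<and>
        (\<lambda>(x, y). h (x, y) - (k/2 * (x^2 + y^2) + ca/6 * x^3 + cb/2 * x * y^2 + cc/6 * y^3))
          \<in> O[at (0, 0)](\<lambda>(x, y). (x^2 + y^2)^2))"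

definition Delta_G :: "real \<Rightarrow> real \<Rightarrow> real \<Rightarrow> real" where
  "Delta_G ca cb cc = 4 * cc^2 * (2*ca - cb)^2
     - (3 * cc^2 + (ca - 5*cb)^2) * (3 * (ca - 5*cb) * (ca - cb) + cc^2)"

definition Delta_P :: "real \<Rightarrow> real \<Rightarrow> real \<Rightarrow> real" where
  "Delta_P ca cb cc = 4 * cb * (ca - 2*cb)^3 - cc^2 * (ca - 2*cb)^2"

definition type_G1 :: "(real^3) set \<Rightarrow> real^3 \<Rightarrow> bool" where
  "type_G1 S p \<longleftrightarrow> (\<exists>e1 e2 N k ca cb cc. monge_chart S p e1 e2 N k ca cb cc \<and>
      k * cb * (cb - ca) \<noteq> 0 \<and> Delta_G ca cb cc > 0)"

definition type_D1 :: "(real^3) set \<Rightarrow> real^3 \<Rightarrow> bool" where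
  "type_D1 S p \<longleftrightarrow> (\<exists>e1 e2 N k ca cb cc. monge_chart S p e1 e2 N k ca cb cc \<and>
      cb * (cb - ca) \<noteq> 0 \<and> Delta_P ca cb cc > 0)"

end

theory Submission
  imports Defs
begin

lemma ell_grad_linear: "linear (ell_grad a b c)"
  by (rule linearI) (auto simp: ell_grad_def vec_eq_iff forall_3 add_divide_distrib algebra_simps)

lemma ell_grad_deriv: "(ell_grad a b c has_derivative ell_grad a b c) (at p)"
  using ell_grad_linear linear_imp_has_derivative by blast

definition NDer where
  "NDer a b c p = (\<lambda>v. inverse (norm (ell_grad a b c p)) *\<^sub>R ell_grad a b c v
     - (inverse (norm (ell_grad a b c p)) * (sgn (ell_grad a b c p) \<bullet> ell_grad a b c v)
         * inverse (norm (ell_grad a b c p))) *\<^sub>R ell_grad a b c p)"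

lemma ell_normal_deriv:
  assumes "ell_grad a b c p \<noteq> 0"
  shows "(ell_normal a b c has_derivative NDer a b c p) (at p)"
proof -
  have n: "((\<lambda>q. norm (ell_grad a b c q)) has_derivative (\<lambda>v. sgn (ell_grad a b c p) \<bullet> ell_grad a b c v)) (at p)"
    using has_derivative_compose[OF ell_grad_deriv has_derivative_norm[OF assms]] by (simp add: inner_commute)
  have i: "((\<lambda>q. inverse (norm (ell_grad a b c q))) has_derivative
     (\<lambda>v. - (inverse (norm (ell_grad a b c p)) * (sgn (ell_grad a b c p) \<bullet> ell_grad a b c v) * inverse (norm (ell_grad a b c p))))) (at p)"
    using Deriv.has_derivative_inverse[OF _ n] assms by simp
  have "((\<lambda>q. inverse (norm (ell_grad a b c q)) *\<^sub>R ell_grad a b c q) has_derivative NDer a b c p) (at p)"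
    using has_derivative_scaleR[OF i ell_grad_deriv] unfolding NDer_def by (simp add: algebra_simps)
  then show ?thesis unfolding ell_normal_def by (simp add: divide_inverse)
qed

lemma core_alg:
  fixes A B C L G1 G2 G3 c1 c2 c3 :: real
  assumes ABC: "A < B" "B < C" and G: "G1 \<noteq> 0 \<or> G2 \<noteq> 0 \<or> G3 \<noteq> 0"
  and a1: "c1 * G1 = 0" "(B-L) * G3 = c1 * G2" "(L - C) * G2 = c1 * G3"
  and a2: "c2 * G1 = (L-A) * G3" "c2 * G2 = 0" "c2 * G3 = (C-L) * G1"
  and a3: "c3 * G1 = (A-L) * G2" "c3 * G2 = (L-B) * G1" "c3 * G3 = 0"
  shows "G2 = 0 \<and> L = B \<and> (A - L) * G3^2 + (C - L) * G1^2 = 0"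
proof -
  have E1: "(B-L) * G3^2 = (L-C) * G2^2"
    by (metis (no_types, lifting) a1(2,3) mult.assoc mult.commute power2_eq_square)
  have E2: "(L-A) * G3^2 = (C-L) * G1^2"
    by (metis (no_types, lifting) a2(1,3) mult.assoc mult.commute power2_eq_square)
  have E3: "(A-L) * G2^2 = (L-B) * G1^2"
    by (metis (no_types, lifting) a3(1,2) mult.assoc mult.commute power2_eq_square)
  have F1: "(B-L) * G1 * G3 = 0" using a1 by (metis mult.assoc mult.commute mult_zero_left)
  have F2: "(L-C) * G1 * G2 = 0" using a1 by (metis mult.assoc mult.commute mult_zero_left)
  have F3: "(L-A) * G2 * G3 = 0" using a2 by (metis mult.assoc mult.commute mult_zero_left)
  have F4: "(A-L) * G2 * G3 = 0" using F3 by (metis minus_diff_eq mult_minus_left neg_equal_0_iff_equal)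
  have G2: "G2 = 0"
  proof (rule ccontr)
    assume n: "G2 \<noteq> 0"
    have s2: "G2^2 > 0" using n by simp
    from F2 n have "(L-C) * G1 = 0" by simp
    from F3 n have "(L-A) * G3 = 0" by simp
    show False
    proof (cases "L = A")
      case True
      then have "(B-L) * G3^2 \<ge> 0" "(L-C) * G2^2 < 0" using ABC s2 by (auto intro!: mult_neg_pos)
      then show False using E1 by linarith
    next
      case False
      then have "G3 = 0" using \<open>(L-A) * G3 = 0\<close> by simp
      show False
      proof (cases "L = C")
        case True
        then have "(A-L) * G2^2 < 0" "(L-B) * G1^2 \<ge> 0" using ABC s2 by (auto intro!: mult_neg_pos)
        then show False using E3 by linarith
      next
        case False
        then have "G1 = 0" using \<open>(L-C) * G1 = 0\<close> by simp
        then have "(A-L) * G2^2 = 0" using E3 by simp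
        then show False using n \<open>L \<noteq> A\<close> by simp
      qed
    qed
  qed
  have "L = B"
  proof (rule ccontr)
    assume "L \<noteq> B"
    then have "G3 = 0" using E1 G2 by simp
    moreover have "G1 = 0" using E3 G2 \<open>L \<noteq> B\<close> by simp
    ultimately show False using G G2 by simp
  qed
  then show ?thesis using G2 E2 by (simp add: algebra_simps)
qed

lemma grad_comp[simp]:
  "ell_grad a b c v $ 1 = 2 * v$1 / a^2"
  "ell_grad a b c v $ 2 = 2 * v$2 / b^2"
  "ell_grad a b c v $ 3 = 2 * v$3 / c^2"
  by (simp_all add: ell_grad_def)

lemma grad_nonzero:
  assumes "p \<in> ellipsoid a b c"
  shows "ell_grad a b c p \<noteq> 0"
proof
  assume "ell_grad a b c p = 0"
  then have "ell_grad a b c p $ 1 = 0" "ell_grad a b c p $ 2 = 0" "ell_grad a b c p $ 3 = 0" by auto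
  then have "p$1 / a^2 = 0" "p$2 / b^2 = 0" "p$3/c^2 = 0" by simp_all
  then show False using assms by (cases "a=0"; cases "b=0"; cases "c=0"; auto simp: ellipsoid_def)
qed

lemma NDer_alt:
  assumes "ell_grad a b c p \<noteq> 0"
  shows "NDer a b c p v = inverse (norm (ell_grad a b c p)) *\<^sub>R
     (ell_grad a b c v - ((ell_grad a b c p \<bullet> ell_grad a b c v) / (norm (ell_grad a b c p))^2) *\<^sub>R ell_grad a b c p)"
  using assms unfolding NDer_def sgn_div_norm
  by (simp add: algebra_simps inner_scaleR_left power2_eq_square divide_inverse)

lemma tangent_iff:
  assumes "ell_grad a b c p \<noteq> 0"
  shows "v \<bullet> ell_normal a b c p = 0 \<longleftrightarrow> v \<bullet> ell_grad a b c p = 0"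
  using assms by (simp add: ell_normal_def)

lemma diff_iff: "(P::real) - Q = R - S \<Longrightarrow> (P = Q \<longleftrightarrow> R = S)"
  by (metis eq_iff_diff_eq_0)

lemma lin2:
  fixes A B C U W :: real
  assumes "A > C"
  shows "(U+W=1 \<and> U*B+W*B = U*C+W*A) \<longleftrightarrow> (B+U*A = A+U*C \<and> C+W*A = B+W*C)"
proof
  assume h: "U+W=1 \<and> U*B+W*B = U*C+W*A"
  then have w: "W = 1 - U" by simp
  have "U*B+(1-U)*B = U*C+(1-U)*A" using h w by simp
  then have "B+U*A = A+U*C" by (simp add: algebra_simps)
  moreover have "C+(1-U)*A = B+(1-U)*C" using \<open>B+U*A = A+U*C\<close> by (simp add: algebra_simps)
  ultimately show "B+U*A = A+U*C \<and> C+W*A = B+W*C" using w by simp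
next
  assume h: "B+U*A = A+U*C \<and> C+W*A = B+W*C"
  then have "(U+W-1)*(A-C) = 0" by (simp add: algebra_simps)
  then have "U+W = 1" using assms by simp
  then have w: "W = 1 - U" by simp
  have "U*B+(1-U)*B = U*C+(1-U)*A" using h by (simp add: algebra_simps)
  then show "U+W=1 \<and> U*B+W*B = U*C+W*A" using w by simp
qed

lemma solve_alg:
  fixes a b c x z :: real
  assumes "a > b" "b > c" "c > 0"
  shows "(x^2/a^2 + z^2/c^2 = 1 \<and> (2/a^2-2/b^2)*(2*z/c^2)^2 + (2/c^2-2/b^2)*(2*x/a^2)^2 = 0)
     \<longleftrightarrow> (x^2 = a^2*(a^2-b^2)/(a^2-c^2) \<and> z^2 = c^2*(b^2-c^2)/(a^2-c^2))"
proof -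
  have nz: "a \<noteq> 0" "b \<noteq> 0" "c \<noteq> 0" using assms by auto
  have a0: "a^2 > 0" "b^2 > 0" "c^2 > 0" using assms by auto
  have ac: "a^2 - c^2 > 0" "a^2 > b^2" "b^2 > c^2" using assms by (auto intro!: power_strict_mono)
  define U where "U = x^2/a^2"
  define W where "W = z^2/c^2"
  have xU: "x^2 = a^2 * U" using a0 U_def by simp
  have zW: "z^2 = c^2 * W" using a0 W_def by simp
  have e2: "(2/a^2-2/b^2)*(2*z/c^2)^2 + (2/c^2-2/b^2)*(2*x/a^2)^2
      = 8 / (a^2*b^2*c^2) * ((b^2-a^2) * W + (b^2-c^2) * U)"
    using nz unfolding U_def W_def by (simp add: field_simps power2_eq_square)
  have "(U + W = 1 \<and> (b^2-a^2) * W + (b^2-c^2) * U = 0) \<longleftrightarrow>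
        (U = (a^2-b^2)/(a^2-c^2) \<and> W = (b^2-c^2)/(a^2-c^2))"
  proof -
    have d: "a^2 - c^2 \<noteq> 0" using ac by simp
    have "U = (a^2-b^2)/(a^2-c^2) \<longleftrightarrow> b^2 + U*a^2 = a^2 + U*c^2"
      using d by (simp add: eq_divide_eq, intro diff_iff, simp add: algebra_simps)
    moreover have "W = (b^2-c^2)/(a^2-c^2) \<longleftrightarrow> c^2 + W*a^2 = b^2 + W*c^2"
      using d by (simp add: eq_divide_eq, intro diff_iff, simp add: algebra_simps)
    moreover have "(b^2-a^2) * W + (b^2-c^2) * U = 0 \<longleftrightarrow> U*b^2+W*b^2 = U*c^2+W*a^2"
      by (intro diff_iff, simp add: algebra_simps)
    ultimately show ?thesis using lin2[of "c^2" "a^2" U W "b^2"] ac by simp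
  qed
  moreover have "x^2 = a^2*(a^2-b^2)/(a^2-c^2) \<longleftrightarrow> U = (a^2-b^2)/(a^2-c^2)"
  proof -
    have "x^2 = a^2*(a^2-b^2)/(a^2-c^2) \<longleftrightarrow> a^2*U = a^2*((a^2-b^2)/(a^2-c^2))" using xU by simp
    also have "\<dots> \<longleftrightarrow> U = (a^2-b^2)/(a^2-c^2)" using nz by (subst mult_cancel_left) simp
    finally show ?thesis .
  qed
  moreover have "z^2 = c^2*(b^2-c^2)/(a^2-c^2) \<longleftrightarrow> W = (b^2-c^2)/(a^2-c^2)"
  proof -
    have "z^2 = c^2*(b^2-c^2)/(a^2-c^2) \<longleftrightarrow> c^2*W = c^2*((b^2-c^2)/(a^2-c^2))" using zW by simp
    also have "\<dots> \<longleftrightarrow> W = (b^2-c^2)/(a^2-c^2)" using nz by (subst mult_cancel_left) simp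
    finally show ?thesis .
  qed
  ultimately show ?thesis using e2 a0 unfolding U_def[symmetric] W_def[symmetric] by auto
qed

lemma umbilic_forward:
  assumes abc: "a > b" "b > c" "c > 0" and U: "ell_umbilic a b c p"
  shows "p$2 = 0 \<and> (p$1)^2/a^2 + (p$3)^2/c^2 = 1 \<and>
     (2/a^2-2/b^2)*(2*p$3/c^2)^2 + (2/c^2-2/b^2)*(2*p$1/a^2)^2 = 0"
proof -
  let ?G = "ell_grad a b c p"
  have pe: "p \<in> ellipsoid a b c" using U by (simp add: ell_umbilic_def)
  have G0: "?G \<noteq> 0" using grad_nonzero[OF pe] .
  obtain D l where D: "(ell_normal a b c has_derivative D) (at p)"
    and Dl: "\<forall>v. v \<bullet> ell_normal a b c p = 0 \<longrightarrow> D v = l *\<^sub>R v"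
    using U by (auto simp: ell_umbilic_def)
  have DN: "D = NDer a b c p" using has_derivative_unique[OF D ell_normal_deriv[OF G0]] .
  define nm where "nm = norm ?G"
  have nm0: "nm > 0" using G0 nm_def by simp
  define L where "L = l * nm"
  define cf where "cf v = (?G \<bullet> ell_grad a b c v) / nm^2" for v
  have key: "ell_grad a b c v - cf v *\<^sub>R ?G = L *\<^sub>R v" if "v \<bullet> ?G = 0" for v
  proof -
    have "D v = l *\<^sub>R v" using Dl that tangent_iff[OF G0] by simp
    then have "inverse nm *\<^sub>R (ell_grad a b c v - cf v *\<^sub>R ?G) = l *\<^sub>R v"
      using NDer_alt[OF G0, of v] DN unfolding cf_def nm_def by simp
    then have "nm *\<^sub>R (inverse nm *\<^sub>R (ell_grad a b c v - cf v *\<^sub>R ?G)) = nm *\<^sub>R (l *\<^sub>R v)" by simp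
    then show ?thesis using nm0 unfolding L_def by (simp add: mult.commute)
  qed
  define G1 where "G1 = 2 * p$1 / a^2"
  define G2 where "G2 = 2 * p$2 / b^2"
  define G3 where "G3 = 2 * p$3 / c^2"
  have Gc: "?G$1 = G1" "?G$2 = G2" "?G$3 = G3" unfolding G1_def G2_def G3_def by simp_all
  define v1 :: "real^3" where "v1 = vector [0, G3, -G2]"
  define v2 :: "real^3" where "v2 = vector [-G3, 0, G1]"
  define v3 :: "real^3" where "v3 = vector [G2, -G1, 0]"
  have t1: "v1 \<bullet> ?G = 0" unfolding v1_def inner_vec_def sum_3 Gc by (simp add: algebra_simps)
  have t2: "v2 \<bullet> ?G = 0" unfolding v2_def inner_vec_def sum_3 Gc by (simp add: algebra_simps)
  have t3: "v3 \<bullet> ?G = 0" unfolding v3_def inner_vec_def sum_3 Gc by (simp add: algebra_simps)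
  have k1: "\<forall>i. (ell_grad a b c v1 - cf v1 *\<^sub>R ?G)$i = (L *\<^sub>R v1)$i" using key[OF t1] by simp
  have k2: "\<forall>i. (ell_grad a b c v2 - cf v2 *\<^sub>R ?G)$i = (L *\<^sub>R v2)$i" using key[OF t2] by simp
  have k3: "\<forall>i. (ell_grad a b c v3 - cf v3 *\<^sub>R ?G)$i = (L *\<^sub>R v3)$i" using key[OF t3] by simp
  have e1: "cf v1 * G1 = 0" "(2/b^2-L) * G3 = cf v1 * G2" "(L - 2/c^2) * G2 = cf v1 * G3"
    using k1[rule_format, of 1] k1[rule_format, of 2] k1[rule_format, of 3]
    unfolding v1_def by (simp_all del: grad_comp add: grad_comp[of a b c "vector _"] Gc algebra_simps)
  have e2: "cf v2 * G1 = (L-2/a^2) * G3" "cf v2 * G2 = 0" "cf v2 * G3 = (2/c^2-L) * G1"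
    using k2[rule_format, of 1] k2[rule_format, of 2] k2[rule_format, of 3]
    unfolding v2_def by (simp_all del: grad_comp add: grad_comp[of a b c "vector _"] Gc algebra_simps)
  have e3: "cf v3 * G1 = (2/a^2-L) * G2" "cf v3 * G2 = (L-2/b^2) * G1" "cf v3 * G3 = 0"
    using k3[rule_format, of 1] k3[rule_format, of 2] k3[rule_format, of 3]
    unfolding v3_def by (simp_all del: grad_comp add: grad_comp[of a b c "vector _"] Gc algebra_simps)
  have ab: "2/a^2 < 2/b^2" "2/b^2 < 2/c^2" using abc
    by (auto simp: divide_strict_left_mono power_strict_mono)
  have Gn: "G1 \<noteq> 0 \<or> G2 \<noteq> 0 \<or> G3 \<noteq> 0" using G0 Gc by (metis exhaust_3 vec_eq_iff zero_index)
  have C: "G2 = 0 \<and> L = 2/b^2 \<and> (2/a^2 - L) * G3^2 + (2/c^2 - L) * G1^2 = 0"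
    using core_alg[OF ab Gn e1 e2 e3] .
  have hL: "L = 2/b^2" and hE: "(2/a^2 - L) * G3^2 + (2/c^2 - L) * G1^2 = 0" using C by auto
  have "(2/a^2 - 2/b^2) * G3^2 + (2/c^2 - 2/b^2) * G1^2 = 0" using hE unfolding hL .
  moreover have "p$2 = 0" using C abc unfolding G2_def by simp
  ultimately show ?thesis using pe unfolding G1_def G3_def by (simp add: ellipsoid_def)
qed

lemma umbilic_backward:
  assumes abc: "a > b" "b > c" "c > 0"
    and h: "p$2 = 0" "(p$1)^2/a^2 + (p$3)^2/c^2 = 1"
       "(2/a^2-2/b^2)*(2*p$3/c^2)^2 + (2/c^2-2/b^2)*(2*p$1/a^2)^2 = 0"
  shows "ell_umbilic a b c p"
proof -
  let ?G = "ell_grad a b c p"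
  have pe: "p \<in> ellipsoid a b c" using h by (simp add: ellipsoid_def)
  have G0: "?G \<noteq> 0" using grad_nonzero[OF pe] .
  define nm where "nm = norm ?G"
  have nm0: "nm > 0" using G0 nm_def by simp
  define G1 where "G1 = 2 * p$1 / a^2"
  define G3 where "G3 = 2 * p$3 / c^2"
  have Gc: "?G$1 = G1" "?G$2 = 0" "?G$3 = G3" unfolding G1_def G3_def using h by simp_all
  define A where "A = 2/a^2 - 2/b^2"
  define C where "C = 2/c^2 - 2/b^2"
  have rel: "A * G3^2 + C * G1^2 = 0" using h(3) unfolding A_def C_def G1_def G3_def .
  have A0: "A < 0" unfolding A_def using abc by (auto simp: divide_strict_left_mono power_strict_mono)
  have G1n: "G1 \<noteq> 0"
  proof
    assume "G1 = 0"
    then have "G3 = 0" using rel A0 by simp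
    then have "?G = 0" using Gc \<open>G1 = 0\<close> by (metis exhaust_3 vec_eq_iff zero_index)
    then show False using G0 by simp
  qed
  have main: "NDer a b c p v = ((2/b^2)/nm) *\<^sub>R v" if tv: "v \<bullet> ell_normal a b c p = 0" for v
  proof -
    have tg: "v$1 * G1 + v$3 * G3 = 0" using tv tangent_iff[OF G0]
      unfolding inner_vec_def sum_3 Gc by simp
    define \<kappa> where "\<kappa> = A * v$1 / G1"
    have c3: "2 * v$3 / c^2 = 2 * v$3 / b^2 + \<kappa> * G3"
    proof -
      have "C * v$3 * G1^2 = A * v$1 * G3 * G1"
      proof -
        have "v$1 * G1 = - v$3 * G3" using tg by simp
        have "A * v$1 * G3 * G1 = A * G3 * (v$1 * G1)" by (simp add: algebra_simps)
        also have "\<dots> = A * G3 * (- v$3 * G3)" using \<open>v$1 * G1 = - v$3 * G3\<close> by simp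
        also have "\<dots> = - A * v$3 * G3^2" by (simp add: power2_eq_square algebra_simps)
        also have "\<dots> = v$3 * (- (A * G3^2))" by (simp add: algebra_simps)
        also have "- (A * G3^2) = C * G1^2" using rel by linarith
        also have "v$3 * (C * G1^2) = C * v$3 * G1^2" by (simp add: algebra_simps)
        finally show ?thesis by simp
      qed
      then have "C * v$3 = \<kappa> * G3" unfolding \<kappa>_def using G1n
        by (simp add: field_simps power2_eq_square)
      then show ?thesis unfolding C_def by (simp add: algebra_simps)
    qed
    have gv: "ell_grad a b c v = (2/b^2) *\<^sub>R v + \<kappa> *\<^sub>R ?G"
    proof -
      have k1: "\<kappa> * G1 = A * v$1" unfolding \<kappa>_def using G1n by simp
      have "2 * v$1 / a^2 = 2/b^2 * v$1 + \<kappa> * G1" unfolding k1 A_def by (simp add: algebra_simps)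
      then show ?thesis unfolding vec_eq_iff forall_3 using c3
        by (simp del: grad_comp add: grad_comp[of a b c v] Gc)
    qed
    have vG: "v \<bullet> ?G = 0" using tv tangent_iff[OF G0] by simp
    have cf: "(?G \<bullet> ell_grad a b c v) / nm^2 = \<kappa>"
      unfolding gv using nm0 vG by (simp add: inner_add_right inner_commute nm_def power2_norm_eq_inner[symmetric])
    show ?thesis unfolding NDer_alt[OF G0] nm_def[symmetric] cf unfolding gv using nm0
      by (simp add: scaleR_add_right field_simps)
  qed
  show ?thesis unfolding ell_umbilic_def
    using pe ell_normal_deriv[OF G0] main by blast
qed

definition hfun :: "real \<Rightarrow> real \<Rightarrow> real \<Rightarrow> real \<Rightarrow> real \<times> real \<Rightarrow> real" where
  "hfun Aq r m K v = (let X = fst v; s = (fst v)^2 + (snd v)^2; w = r + m * X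
      in - K * s / (w + sqrt (w^2 - Aq * K * s)))"

lemma pointwise:
  fixes Aq r m K X Y :: real
  assumes r: "r > 0" and mX: "\<bar>m * X\<bar> \<le> r/2" and AK: "\<bar>Aq * K\<bar> * (X^2+Y^2) \<le> r^2/4"
  defines "s \<equiv> X^2 + Y^2"
  defines "w \<equiv> r + m * X"
  defines "h \<equiv> hfun Aq r m K (X, Y)"
  shows "Aq * h^2 + 2 * w * h + K * s = 0"
    and "\<bar>h + K * s / (2*r) - K * m / (2 * r^2) * X * s\<bar>
           \<le> ((\<bar>Aq\<bar> * 4 * K^2 + \<bar>K\<bar> * m^2) / r^3) * s^2"
proof -
  have s0: "s \<ge> 0" unfolding s_def by simp
  have w2: "w \<ge> r/2" unfolding w_def using mX by linarith
  have wpos: "w > 0" using w2 r by linarith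
  define D where "D = w^2 - Aq * K * s"
  have "Aq * K * s \<le> \<bar>Aq * K\<bar> * s" using s0 by (metis abs_ge_self mult_right_mono)
  also have "\<dots> \<le> r^2/4" using AK unfolding s_def by simp
  also have "r^2/4 \<le> w^2"
  proof -
    have "(r/2)^2 \<le> w^2" using w2 r by (intro power_mono) auto
    then show ?thesis by (simp add: power_divide)
  qed
  finally have D0: "D \<ge> 0" unfolding D_def by simp
  define R where "R = sqrt D"
  have R0: "R \<ge> 0" and RR: "R^2 = D" unfolding R_def using D0 by auto
  define den where "den = w + R"
  have den2: "den \<ge> r/2" unfolding den_def using w2 R0 by linarith
  have denp: "den > 0" using den2 r by linarith
  have hdef: "h = - K * s / den" unfolding h_def hfun_def den_def R_def D_def s_def w_def by (simp add: Let_def)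
  show quad: "Aq * h^2 + 2 * w * h + K * s = 0"
  proof -
    have e1: "Aq * h^2 + 2 * w * h + K * s = (Aq * K^2 * s^2 + K * s * (den^2 - 2 * w * den)) / den^2"
      unfolding hdef using denp by (simp add: field_simps power2_eq_square)
    have e2: "den^2 - 2 * w * den = R^2 - w^2" unfolding den_def by (simp add: power2_eq_square algebra_simps)
    have "Aq * K^2 * s^2 + K * s * (den^2 - 2 * w * den) = K * s * (Aq * K * s + R^2 - w^2)"
      unfolding e2 by (simp add: power2_eq_square algebra_simps)
    also have "\<dots> = 0" using RR unfolding D_def by simp
    finally show ?thesis using e1 by simp
  qed
  have hb: "\<bar>h\<bar> \<le> 2 * \<bar>K\<bar> * s / r"
  proof -
    have "\<bar>h\<bar> = \<bar>K\<bar> * s / den" unfolding hdef using s0 denp by (simp add: abs_mult abs_divide)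
    also have "\<dots> \<le> \<bar>K\<bar> * s / (r/2)"
      using den2 r s0 by (intro divide_left_mono) (auto intro: mult_nonneg_nonneg)
    also have "\<dots> = 2 * \<bar>K\<bar> * s / r" by simp
    finally show ?thesis .
  qed
  define f where "f = h + K * s / (2*r) - K * m / (2 * r^2) * X * s"
  have X2: "X^2 \<le> s" unfolding s_def by simp
  have fid: "2 * w * f = (Aq * h^2 + 2 * w * h + K * s) - Aq * h^2 - K * m^2 * X^2 * s / r^2"
    unfolding f_def w_def using r by (simp add: field_simps power2_eq_square)
  then have fid2: "2 * w * f = - (Aq * h^2 + K * m^2 * X^2 * s / r^2)" using quad by simp
  have "\<bar>f\<bar> * r \<le> \<bar>f\<bar> * (2 * w)" using w2 by (intro mult_left_mono) auto
  also have "\<dots> = \<bar>2 * w * f\<bar>" using wpos by (simp add: abs_mult)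
  also have "\<dots> = \<bar>Aq * h^2 + K * m^2 * X^2 * s / r^2\<bar>" unfolding fid2 by (rule abs_minus_cancel)
  also have "\<dots> \<le> \<bar>Aq\<bar> * h^2 + \<bar>K\<bar> * m^2 * X^2 * s / r^2"
  proof -
    have "\<bar>Aq * h^2 + K * m^2 * X^2 * s / r^2\<bar> \<le> \<bar>Aq * h^2\<bar> + \<bar>K * m^2 * X^2 * s / r^2\<bar>"
      by (rule abs_triangle_ineq)
    also have "\<bar>Aq * h^2\<bar> = \<bar>Aq\<bar> * h^2" by (simp add: abs_mult)
    also have "\<bar>K * m^2 * X^2 * s / r^2\<bar> = \<bar>K\<bar> * m^2 * X^2 * s / r^2" using s0 by (simp add: abs_mult abs_divide)
    finally show ?thesis .
  qed
  also have "\<dots> \<le> \<bar>Aq\<bar> * (2 * \<bar>K\<bar> * s / r)^2 + \<bar>K\<bar> * m^2 * s * s / r^2"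
  proof (intro add_mono mult_left_mono divide_right_mono)
    show "h^2 \<le> (2 * \<bar>K\<bar> * s / r)^2" using hb by (metis abs_ge_zero power2_abs power_mono)
    show "\<bar>K\<bar> * m^2 * X^2 * s \<le> \<bar>K\<bar> * m^2 * s * s"
      using X2 s0 by (intro mult_right_mono mult_left_mono) auto
  qed auto
  also have "\<dots> = ((\<bar>Aq\<bar> * 4 * K^2 + \<bar>K\<bar> * m^2) / r^3) * s^2 * r"
    using r by (simp add: field_simps power2_eq_square power3_eq_cube)
  finally have "\<bar>f\<bar> * r \<le> ((\<bar>Aq\<bar> * 4 * K^2 + \<bar>K\<bar> * m^2) / r^3) * s^2 * r" .
  then show "\<bar>h + K * s / (2*r) - K * m / (2 * r^2) * X * s\<bar>
           \<le> ((\<bar>Aq\<bar> * 4 * K^2 + \<bar>K\<bar> * m^2) / r^3) * s^2"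
    using r mult_le_cancel_right_pos unfolding f_def by blast
qed

lemma small_ball:
  fixes r m Aq K X Y :: real
  assumes r: "r > 0"
  defines "\<delta> \<equiv> min 1 (min (r / (2 * (\<bar>m\<bar> + 1))) (r^2 / (4 * (\<bar>Aq * K\<bar> + 1))))"
  assumes d: "sqrt (X^2 + Y^2) < \<delta>"
  shows "\<bar>m * X\<bar> \<le> r/2" "\<bar>Aq * K\<bar> * (X^2+Y^2) \<le> r^2/4"
proof -
  have dpos: "\<delta> > 0" unfolding \<delta>_def using r by auto
  have d1: "\<delta> \<le> 1" unfolding \<delta>_def by simp
  have Xs: "\<bar>X\<bar> \<le> sqrt (X^2 + Y^2)" by (simp add: real_sqrt_ge_abs1)
  have Xd: "\<bar>X\<bar> < \<delta>" using Xs d by linarith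
  have "\<bar>m * X\<bar> = \<bar>m\<bar> * \<bar>X\<bar>" by (simp add: abs_mult)
  also have "\<dots> \<le> (\<bar>m\<bar> + 1) * \<delta>" using Xd by (intro mult_mono) auto
  also have "\<dots> \<le> (\<bar>m\<bar> + 1) * (r / (2 * (\<bar>m\<bar> + 1)))" unfolding \<delta>_def
    by (intro mult_left_mono) auto
  also have "\<dots> = r/2" by (simp add: field_simps)
  finally show "\<bar>m * X\<bar> \<le> r/2" .
  have s0: "0 \<le> X^2 + Y^2" by simp
  have "X^2 + Y^2 = (sqrt (X^2 + Y^2))^2" by simp
  also have "\<dots> \<le> \<delta>^2" using d by (intro power_mono) auto
  also have "\<dots> \<le> \<delta>" using d1 dpos by (simp add: power2_eq_square mult_left_le)
  finally have sd: "X^2 + Y^2 \<le> \<delta>" .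
  have "\<bar>Aq * K\<bar> * (X^2+Y^2) \<le> (\<bar>Aq * K\<bar> + 1) * \<delta>" using sd s0 by (intro mult_mono) auto
  also have "\<dots> \<le> (\<bar>Aq * K\<bar> + 1) * (r^2 / (4 * (\<bar>Aq * K\<bar> + 1)))" unfolding \<delta>_def
    by (intro mult_left_mono) auto
  also have "\<dots> = r^2/4" by (simp add: field_simps)
  finally show "\<bar>Aq * K\<bar> * (X^2+Y^2) \<le> r^2/4" .
qed

lemma monge_abstract:
  fixes S :: "(real^3) set" and p e1 e2 N :: "real^3" and Aq r m K :: real
  assumes pS: "p \<in> S"
    and on: "e1 \<bullet> e1 = 1" "e2 \<bullet> e2 = 1" "N \<bullet> N = 1" "e1 \<bullet> e2 = 0" "e1 \<bullet> N = 0" "e2 \<bullet> N = 0"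
    and r: "r > 0"
    and quad: "\<And>X Y h. Aq*h^2 + 2*(r+m*X)*h + K*(X^2+Y^2) = 0 \<Longrightarrow> p + X *\<^sub>R e1 + Y *\<^sub>R e2 + h *\<^sub>R N \<in> S"
  shows "monge_chart S p e1 e2 N (-K/r) (3*K*m/r^2) (K*m/r^2) 0"
proof -
  define \<delta> where "\<delta> = min 1 (min (r / (2 * (\<bar>m\<bar> + 1))) (r^2 / (4 * (\<bar>Aq * K\<bar> + 1))))"
  have dpos: "\<delta> > 0" unfolding \<delta>_def using r by auto
  define h where "h = hfun Aq r m K"
  define M where "M = (\<bar>Aq\<bar> * 4 * K^2 + \<bar>K\<bar> * m^2) / r^3"
  have dist0: "dist v (0,0) = sqrt ((fst v)^2 + (snd v)^2)" for v :: "real \<times> real"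
    by (cases v) (simp add: dist_Pair_Pair dist_real_def)
  have ball: "\<forall>\<^sub>F v in nhds (0,0). \<bar>m * fst v\<bar> \<le> r/2 \<and> \<bar>Aq * K\<bar> * ((fst v)^2 + (snd v)^2) \<le> r^2/4"
  proof -
    have "\<forall>v. dist v (0,0) < \<delta> \<longrightarrow> \<bar>m * fst v\<bar> \<le> r/2 \<and> \<bar>Aq * K\<bar> * ((fst v)^2 + (snd v)^2) \<le> r^2/4"
    proof (intro allI impI)
      fix v :: "real \<times> real" assume "dist v (0,0) < \<delta>"
      then have "sqrt ((fst v)^2 + (snd v)^2) < \<delta>" using dist0 by simp
      then show "\<bar>m * fst v\<bar> \<le> r/2 \<and> \<bar>Aq * K\<bar> * ((fst v)^2 + (snd v)^2) \<le> r^2/4"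
        using small_ball[OF r, where m=m and Aq=Aq and K=K and X="fst v" and Y="snd v"] unfolding \<delta>_def by auto
    qed
    then show ?thesis using dpos by (subst eventually_nhds_metric) blast
  qed
  have h0: "h (0,0) = 0" unfolding h_def hfun_def by simp
  have inS: "\<forall>\<^sub>F v in nhds (0,0). p + fst v *\<^sub>R e1 + snd v *\<^sub>R e2 + h v *\<^sub>R N \<in> S"
    using ball
  proof eventually_elim
    case (elim v)
    then have "Aq * (h v)^2 + 2 * (r + m * fst v) * h v + K * ((fst v)^2 + (snd v)^2) = 0"
      using pointwise(1)[OF r, where m=m and Aq=Aq and K=K and X="fst v" and Y="snd v"] unfolding h_def by simp
    then show ?case using quad by blast
  qed
  have bO: "(\<lambda>(x, y). h (x, y) - (-K/r/2 * (x^2 + y^2) + 3*K*m/r^2/6 * x^3 + K*m/r^2/2 * x * y^2 + 0/6 * y^3))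
          \<in> O[at (0, 0)](\<lambda>(x, y). (x^2 + y^2)^2)"
  proof (rule bigoI[where c = M])
    show "\<forall>\<^sub>F v in at (0,0). norm ((\<lambda>(x, y). h (x, y) - (-K/r/2 * (x^2 + y^2) + 3*K*m/r^2/6 * x^3 + K*m/r^2/2 * x * y^2 + 0/6 * y^3)) v)
       \<le> M * norm ((\<lambda>(x, y). (x^2 + y^2)^2) v)"
      unfolding eventually_at_filter using ball
    proof eventually_elim
      case (elim v)
      obtain X Y where v: "v = (X, Y)" by (cases v)
      have pw: "\<bar>h (X,Y) + K * (X^2+Y^2) / (2*r) - K * m / (2 * r^2) * X * (X^2+Y^2)\<bar> \<le> M * (X^2+Y^2)^2"
        using pointwise(2)[OF r, where m=m and Aq=Aq and K=K and X=X and Y=Y] elim unfolding v h_def M_def by simp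
      have eq: "h (X, Y) - (-K/r/2 * (X^2 + Y^2) + 3*K*m/r^2/6 * X^3 + K*m/r^2/2 * X * Y^2 + 0/6 * Y^3)
         = h (X,Y) + K * (X^2+Y^2) / (2*r) - K * m / (2 * r^2) * X * (X^2+Y^2)"
        using r by (simp add: field_simps power2_eq_square power3_eq_cube)
      show ?case unfolding v prod.case eq real_norm_def using pw by simp
    qed
  qed
  show ?thesis unfolding monge_chart_def
    using pS on h0 inS bO by (intro conjI exI[of _ h]) auto
qed

lemma inner3: "(x::real^3) \<bullet> y = x$1 * y$1 + x$2 * y$2 + x$3 * y$3"
  by (simp add: inner_vec_def sum_3)

lemma umbilic_monge:
  fixes a b c :: real and p :: "real^3"
  assumes abc: "a > b" "b > c" "c > 0"
    and p2: "p$2 = 0" and pe: "(p$1)^2/a^2 + (p$3)^2/c^2 = 1"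
    and rel: "(1/a^2 - 1/b^2) * (p$3/c^2)^2 + (1/c^2 - 1/b^2) * (p$1/a^2)^2 = 0"
    and p1n: "p$1 \<noteq> 0" and p3n: "p$3 \<noteq> 0"
  shows "type_G1 (ellipsoid a b c) p \<and> type_D1 (ellipsoid a b c) p"
proof -
  have nz: "a \<noteq> 0" "b \<noteq> 0" "c \<noteq> 0" using abc by auto
  define n1 where "n1 = p$1/a^2"
  define n3 where "n3 = p$3/c^2"
  have n1n: "n1 \<noteq> 0" and n3n: "n3 \<noteq> 0" unfolding n1_def n3_def using p1n p3n nz by auto
  have pn1: "p$1 = a^2 * n1" and pn3: "p$3 = c^2 * n3" unfolding n1_def n3_def using nz by auto
  define \<rho> where "\<rho> = sqrt (n1^2 + n3^2)"
  have rpos: "\<rho> > 0" unfolding \<rho>_def using n1n by (simp add: add_pos_nonneg)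
  have rr: "\<rho>^2 = n1^2 + n3^2" unfolding \<rho>_def by simp
  define N :: "real^3" where "N = vector [n1/\<rho>, 0, n3/\<rho>]"
  define e1 :: "real^3" where "e1 = vector [-n3/\<rho>, 0, n1/\<rho>]"
  define e2 :: "real^3" where "e2 = vector [0, 1, 0]"
  define Aq where "Aq = (n1^2/a^2 + n3^2/c^2)/\<rho>^2"
  define m where "m = n1 * n3 * (1/c^2 - 1/a^2) / \<rho>^2"
  define K where "K = 1/b^2"
  have rel2: "n3^2/a^2 + n1^2/c^2 = (n1^2 + n3^2) / b^2"
    using rel unfolding n1_def[symmetric] n3_def[symmetric] by (simp add: field_simps, simp add: add_divide_distrib)
  have on: "e1 \<bullet> e1 = 1" "e2 \<bullet> e2 = 1" "N \<bullet> N = 1" "e1 \<bullet> e2 = 0" "e1 \<bullet> N = 0" "e2 \<bullet> N = 0"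
    unfolding e1_def e2_def N_def inner3 using rpos rr[symmetric]
    by (simp_all add: field_simps power2_eq_square)
  have pS: "p \<in> ellipsoid a b c" using pe p2 by (simp add: ellipsoid_def)
  have quad: "p + X *\<^sub>R e1 + Y *\<^sub>R e2 + h *\<^sub>R N \<in> ellipsoid a b c"
    if q: "Aq*h^2 + 2*(\<rho>+m*X)*h + K*(X^2+Y^2) = 0" for X Y h
  proof -
    define u1 where "u1 = (h * n1 - X * n3) / \<rho>"
    define u3 where "u3 = (X * n1 + h * n3) / \<rho>"
    have c1: "(p + X *\<^sub>R e1 + Y *\<^sub>R e2 + h *\<^sub>R N)$1 = p$1 + u1"
      unfolding e1_def e2_def N_def u1_def using rpos by (simp add: field_simps)
    have c2: "(p + X *\<^sub>R e1 + Y *\<^sub>R e2 + h *\<^sub>R N)$2 = Y"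
      unfolding e1_def e2_def N_def using p2 by simp
    have c3: "(p + X *\<^sub>R e1 + Y *\<^sub>R e2 + h *\<^sub>R N)$3 = p$3 + u3"
      unfolding e1_def e2_def N_def u3_def using rpos by (simp add: field_simps)
    have l1: "p$1 * u1 / a^2 + p$3 * u3 / c^2 = h * \<rho>"
    proof -
      have "p$1 * u1 / a^2 + p$3 * u3 / c^2 = n1 * u1 + n3 * u3" unfolding pn1 pn3 using nz by simp
      also have "\<dots> = h * (n1^2+n3^2) / \<rho>" unfolding u1_def u3_def
        by (simp add: power2_eq_square add_divide_distrib[symmetric] diff_divide_distrib[symmetric] algebra_simps)
      also have "\<dots> = h * \<rho>" unfolding rr[symmetric] using rpos by (simp add: power2_eq_square)
      finally show ?thesis .
    qed
    have l2: "u1^2/a^2 + u3^2/c^2 = Aq * h^2 + 2 * m * X * h + K * X^2"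
    proof -
      have "u1^2/a^2 + u3^2/c^2 = ((h * n1 - X * n3)^2/a^2 + (X * n1 + h * n3)^2/c^2) / \<rho>^2"
      proof -
        have gen: "(A/\<rho>)^2/a^2 + (B/\<rho>)^2/c^2 = (A^2/a^2 + B^2/c^2)/\<rho>^2" for A B :: real
          by (simp add: power_divide add_divide_distrib divide_divide_eq_left mult.commute)
        show ?thesis unfolding u1_def u3_def by (rule gen)
      qed
      also have "(h * n1 - X * n3)^2/a^2 + (X * n1 + h * n3)^2/c^2 = h^2 * (n1^2/a^2 + n3^2/c^2) + 2*h*X*(n1*n3*(1/c^2 - 1/a^2))
          + X^2 * (n3^2/a^2 + n1^2/c^2)"
        by (simp add: power2_eq_square add_divide_distrib diff_divide_distrib algebra_simps)
      also have "(h^2 * (n1^2/a^2 + n3^2/c^2) + 2*h*X*(n1*n3*(1/c^2 - 1/a^2))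
          + X^2 * (n3^2/a^2 + n1^2/c^2)) / \<rho>^2 = Aq * h^2 + 2 * m * X * h + K * X^2"
      proof -
        have rel3: "n3^2/a^2 + n1^2/c^2 = \<rho>^2 / b^2" using rel2 rr by simp
        show ?thesis unfolding rel3 Aq_def m_def K_def using rpos by (simp add: field_simps)
      qed
      finally show ?thesis .
    qed
    have "(p$1 + u1)^2/a^2 + Y^2/b^2 + (p$3 + u3)^2/c^2
        = ((p$1)^2/a^2 + (p$3)^2/c^2) + 2 * (p$1 * u1 / a^2 + p$3 * u3 / c^2)
          + (u1^2/a^2 + u3^2/c^2) + Y^2/b^2"
      by (simp add: power2_sum add_divide_distrib algebra_simps)
    also have "\<dots> = 1 + (Aq*h^2 + 2*(\<rho>+m*X)*h + K*(X^2+Y^2))"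
      unfolding pe l1 l2 K_def by (simp add: algebra_simps)
    also have "\<dots> = 1" using q by simp
    finally show ?thesis unfolding ellipsoid_def mem_Collect_eq c1 c2 c3 .
  qed
  have MC: "monge_chart (ellipsoid a b c) p e1 e2 N (-K/\<rho>) (3*K*m/\<rho>^2) (K*m/\<rho>^2) 0"
    using monge_abstract[OF pS on rpos, where Aq=Aq and m=m and K=K] quad by blast
  define t where "t = K*m/\<rho>^2"
  have mn: "m \<noteq> 0" unfolding m_def using n1n n3n rpos abc
    by (auto simp: field_simps power_strict_mono)
  have tn: "t \<noteq> 0" unfolding t_def K_def using mn rpos nz by simp
  have kn: "-K/\<rho> \<noteq> 0" unfolding K_def using rpos nz by simp
  have ca: "3*K*m/\<rho>^2 = 3*t" unfolding t_def by simp
  have G: "type_G1 (ellipsoid a b c) p"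
    unfolding type_G1_def
  proof (intro exI conjI)
    show "monge_chart (ellipsoid a b c) p e1 e2 N (-K/\<rho>) (3*t) t 0" using MC unfolding ca t_def .
    show "-K/\<rho> * t * (t - 3*t) \<noteq> 0" using kn tn by simp
    have "Delta_G (3*t) t 0 = 48 * t^4" unfolding Delta_G_def by (simp add: power2_eq_square power4_eq_xxxx algebra_simps)
    then show "Delta_G (3*t) t 0 > 0" using tn by simp
  qed
  have D: "type_D1 (ellipsoid a b c) p"
    unfolding type_D1_def
  proof (intro exI conjI)
    show "monge_chart (ellipsoid a b c) p e1 e2 N (-K/\<rho>) (3*t) t 0" using MC unfolding ca t_def .
    show "t * (t - 3*t) \<noteq> 0" using tn by simp
    have "Delta_P (3*t) t 0 = 4 * t^4" unfolding Delta_P_def by (simp add: power2_eq_square power3_eq_cube power4_eq_xxxx algebra_simps)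
    then show "Delta_P (3*t) t 0 > 0" using tn by simp
  qed
  show ?thesis using G D by simp
qed

lemma umbilic_iff:
  assumes abc: "a > b" "b > c" "c > 0"
  shows "ell_umbilic a b c p \<longleftrightarrow> p$2 = 0 \<and> (p$1)^2 = a^2*(a^2-b^2)/(a^2-c^2) \<and> (p$3)^2 = c^2*(b^2-c^2)/(a^2-c^2)"
proof
  assume "ell_umbilic a b c p"
  then show "p$2 = 0 \<and> (p$1)^2 = a^2*(a^2-b^2)/(a^2-c^2) \<and> (p$3)^2 = c^2*(b^2-c^2)/(a^2-c^2)"
    using umbilic_forward[OF abc] solve_alg[OF abc] by blast
next
  assume h: "p$2 = 0 \<and> (p$1)^2 = a^2*(a^2-b^2)/(a^2-c^2) \<and> (p$3)^2 = c^2*(b^2-c^2)/(a^2-c^2)"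
  then show "ell_umbilic a b c p"
    using umbilic_backward[OF abc] solve_alg[OF abc, of "p$1" "p$3"] by blast
qed

theorem proposition7:
  fixes a b c :: real
  assumes "a > b" and "b > c" and "c > 0"
  shows "finite {p. ell_umbilic a b c p} \<and> card {p. ell_umbilic a b c p} = 4 \<and>
         (\<forall>p. ell_umbilic a b c p \<longrightarrow>
            p$2 = 0 \<and> type_G1 (ellipsoid a b c) p \<and> type_D1 (ellipsoid a b c) p)"
proof -
  note abc = assms
  define X0 where "X0 = a^2*(a^2-b^2)/(a^2-c^2)"
  define Z0 where "Z0 = c^2*(b^2-c^2)/(a^2-c^2)"
  have ac: "a^2 - c^2 > 0" "a^2 - b^2 > 0" "b^2 - c^2 > 0" using abc by (auto intro!: power_strict_mono)
  have X0p: "X0 > 0" unfolding X0_def using ac abc by auto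
  have Z0p: "Z0 > 0" unfolding Z0_def using ac abc by auto
  define x0 where "x0 = sqrt X0"
  define z0 where "z0 = sqrt Z0"
  have x0p: "x0 > 0" and z0p: "z0 > 0" unfolding x0_def z0_def using X0p Z0p by auto
  have x0s: "x0^2 = X0" and z0s: "z0^2 = Z0" unfolding x0_def z0_def using X0p Z0p by auto
  have UI: "ell_umbilic a b c p \<longleftrightarrow> p$2 = 0 \<and> (p$1)^2 = x0^2 \<and> (p$3)^2 = z0^2" for p
    using umbilic_iff[OF abc] unfolding x0s z0s X0_def Z0_def by blast
  have SE: "{p. ell_umbilic a b c p} = {vector [x0,0,z0], vector [x0,0,-z0], vector [-x0,0,z0], vector [-x0,0,-z0]}"
  proof (rule set_eqI)
    fix p :: "real^3"
    have pv: "p = vector [p$1, p$2, p$3]" by (simp add: vec_eq_iff forall_3)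
    show "p \<in> {p. ell_umbilic a b c p} \<longleftrightarrow> p \<in> {vector [x0,0,z0], vector [x0,0,-z0], vector [-x0,0,z0], vector [-x0,0,-z0]}"
      unfolding mem_Collect_eq UI power2_eq_iff
      by (subst pv) (auto simp: vec_eq_iff forall_3)
  qed
  have card: "card {p. ell_umbilic a b c p} = 4"
    unfolding SE using x0p z0p by (simp add: vec_eq_iff forall_3)
  have fin: "finite {p. ell_umbilic a b c p}" unfolding SE by simp
  have types: "p$2 = 0 \<and> type_G1 (ellipsoid a b c) p \<and> type_D1 (ellipsoid a b c) p"
    if U: "ell_umbilic a b c p" for p
  proof -
    have F: "p$2 = 0 \<and> (p$1)^2/a^2 + (p$3)^2/c^2 = 1 \<and>
     (2/a^2-2/b^2)*(2*p$3/c^2)^2 + (2/c^2-2/b^2)*(2*p$1/a^2)^2 = 0"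
      using umbilic_forward[OF abc U] .
    have p1: "p$1 \<noteq> 0" using UI[of p] U x0p by auto
    have p3: "p$3 \<noteq> 0" using UI[of p] U z0p by auto
    have e8: "(2/a^2-2/b^2)*(2*p$3/c^2)^2 + (2/c^2-2/b^2)*(2*p$1/a^2)^2
        = 8 * ((1/a^2 - 1/b^2) * (p$3/c^2)^2 + (1/c^2 - 1/b^2) * (p$1/a^2)^2)"
      by (simp add: power2_eq_square algebra_simps)
    have rel: "(1/a^2 - 1/b^2) * (p$3/c^2)^2 + (1/c^2 - 1/b^2) * (p$1/a^2)^2 = 0"
      using F e8 by simp
    show ?thesis using umbilic_monge[OF abc _ _ rel p1 p3] F by blast
  qed
  show ?thesis using fin card types by blast
qed

end
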